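(* The relation $\mathrm{Step}^{(p)}$ (par-steps of the algorithm BFS) is well-founded: there is no infinite sequence of configurations $\gamma_0,\gamma_1,\dots$ with $\gamma_i\xrightarrow{\mathrm{Step}^{(p)}}\gamma_{i+1}$ for all $i$.
   Context: Let $G$ be a finite, connected, undirected graph with node set $V$ and a distinguished node $r$ (the root). Each node $p$ has a fixed ordered list $N(p)$ of its neighbours. A configuration $\gamma$ assigns to each node $p$ a value $\gamma.p.d\in\mathbb N$ and a neighbour $\gamma.p.par\in N(p)$. For a non-root node $p$ let $Dist_p(\gamma)=\min\{\gamma.q.d+1 : q\in N(p)\}$. Algorithm BFS (Dolev et al.) has the following actions. Root: enabled iff $\gamma.r.d\neq 0$; executing it sets $r.d:=0$. Non-root $p$, action CD: enabled iff $\gamma.p.d\ne Dist_p(\gamma)$; executing sets $p.d:=Dist_p(\gamma)$. Non-root $p$, action CP: enabled iff $\gamma.p.d=Dist_p(\gamma)$ and $\gamma.q_0.d+1\neq\gamma.p.d$ where $q_0=\gamma.p.par$; executing sets $p.par$ to the first $q$ in the list $N(p)$ with $\gamma.q.d+1=\gamma.p.d$. A node is enabled if one of its actions is enabled (at most one is). A step $\gamma\to\gamma'$ (relation $\mathrm{Step}$, unfair daemon) holds iff there is a nonempty set $S$ of nodes enabled in $\gamma$ such that $\gamma'$ is obtained by every $p\in S$ simultaneously executing its enabled action (guards and right-hand sides evaluated in $\gamma$), all other nodes keeping their values. $\mathrm{Step}^{(p)}$ is the set of steps $\gamma\to\gamma'$ with $\gamma'.p.d=\gamma.p.d$ for all nodes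 $p$. A relation is well-founded if it admits no infinite forward chain $x_0 R x_1 R x_2\cdots$. *)

theory Defs
  imports Main
begin

text \<open>Graph given by node set V, root r and ordered neighbour lists N.
  A configuration is a pair (d, par) of the distance and parent variables.\<close>

type_synonym 'v config = "('v \<Rightarrow> nat) \<times> ('v \<Rightarrow> 'v)"

definition graph_edges :: "('v \<Rightarrow> 'v list) \<Rightarrow> ('v \<times> 'v) set" where
  "graph_edges N = {(p, q). q \<in> set (N p)}"

definition rooted_graph :: "'v set \<Rightarrow> ('v \<Rightarrow> 'v list) \<Rightarrow> 'v \<Rightarrow> bool" where
  "rooted_graph V N r \<longleftrightarrow>
     finite V \<and> r \<in> V \<and>
     (\<forall>p\<in>V. set (N p) \<subseteq> V \<and> distinct (N p) \<and> p \<notin> set (N p)) \<and>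
     (\<forall>p\<in>V. \<forall>q\<in>V. q \<in> set (N p) \<longleftrightarrow> p \<in> set (N q)) \<and>
     (\<forall>p\<in>V. (r, p) \<in> (graph_edges N)\<^sup>*)"

definition is_config :: "'v set \<Rightarrow> ('v \<Rightarrow> 'v list) \<Rightarrow> 'v config \<Rightarrow> bool" where
  "is_config V N \<gamma> \<longleftrightarrow> (\<forall>p\<in>V. snd \<gamma> p \<in> set (N p))"

definition Dist :: "('v \<Rightarrow> 'v list) \<Rightarrow> ('v \<Rightarrow> nat) \<Rightarrow> 'v \<Rightarrow> nat" where
  "Dist N d p = Min ((\<lambda>q. d q + 1) ` set (N p))"

definition CD_enabled :: "('v \<Rightarrow> 'v list) \<Rightarrow> 'v config \<Rightarrow> 'v \<Rightarrow> bool" where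
  "CD_enabled N \<gamma> p \<longleftrightarrow> fst \<gamma> p \<noteq> Dist N (fst \<gamma>) p"

definition CP_enabled :: "('v \<Rightarrow> 'v list) \<Rightarrow> 'v config \<Rightarrow> 'v \<Rightarrow> bool" where
  "CP_enabled N \<gamma> p \<longleftrightarrow> fst \<gamma> p = Dist N (fst \<gamma>) p \<and>
      fst \<gamma> (snd \<gamma> p) + 1 \<noteq> fst \<gamma> p"

definition enabled :: "'v set \<Rightarrow> ('v \<Rightarrow> 'v list) \<Rightarrow> 'v \<Rightarrow> 'v config \<Rightarrow> 'v \<Rightarrow> bool" where
  "enabled V N r \<gamma> p \<longleftrightarrow> p \<in> V \<and>
     (if p = r then fst \<gamma> r \<noteq> 0 else CD_enabled N \<gamma> p \<or> CP_enabled N \<gamma> p)"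

definition new_d :: "('v \<Rightarrow> 'v list) \<Rightarrow> 'v \<Rightarrow> 'v config \<Rightarrow> 'v \<Rightarrow> nat" where
  "new_d N r \<gamma> p = (if p = r then 0
      else if CD_enabled N \<gamma> p then Dist N (fst \<gamma>) p else fst \<gamma> p)"

definition new_par :: "('v \<Rightarrow> 'v list) \<Rightarrow> 'v \<Rightarrow> 'v config \<Rightarrow> 'v \<Rightarrow> 'v" where
  "new_par N r \<gamma> p = (if p \<noteq> r \<and> CP_enabled N \<gamma> p
      then hd (filter (\<lambda>q. fst \<gamma> q + 1 = fst \<gamma> p) (N p)) else snd \<gamma> p)"

definition Step :: "'v set \<Rightarrow> ('v \<Rightarrow> 'v list) \<Rightarrow> 'v \<Rightarrow> 'v config \<Rightarrow> 'v config \<Rightarrow> bool" where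
  "Step V N r \<gamma> \<gamma>' \<longleftrightarrow> is_config V N \<gamma> \<and> is_config V N \<gamma>' \<and>
     (\<exists>S. S \<noteq> {} \<and> (\<forall>p\<in>S. enabled V N r \<gamma> p) \<and>
        (\<forall>p. fst \<gamma>' p = (if p \<in> S then new_d N r \<gamma> p else fst \<gamma> p)) \<and>
        (\<forall>p. snd \<gamma>' p = (if p \<in> S then new_par N r \<gamma> p else snd \<gamma> p)))"

definition Step_par :: "'v set \<Rightarrow> ('v \<Rightarrow> 'v list) \<Rightarrow> 'v \<Rightarrow> 'v config \<Rightarrow> 'v config \<Rightarrow> bool" where
  "Step_par V N r \<gamma> \<gamma>' \<longleftrightarrow> Step V N r \<gamma> \<gamma>' \<and> (\<forall>p\<in>V. fst \<gamma>' p = fst \<gamma> p)"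

end

theory Submission
  imports Defs
begin

definition Bad :: "'v set \<Rightarrow> 'v \<Rightarrow> 'v config \<Rightarrow> 'v set" where
  "Bad V r \<gamma> = {p\<in>V. p \<noteq> r \<and> fst \<gamma> (snd \<gamma> p) + 1 \<noteq> fst \<gamma> p}"

lemma step_par_dec:
  assumes st: "Step_par V N r \<gamma> \<gamma>'"
  shows "fst \<gamma>' = fst \<gamma> \<and> Bad V r \<gamma>' \<subset> Bad V r \<gamma>"
proof -
  from st have cg': "is_config V N \<gamma>'" and
    dV: "\<forall>p\<in>V. fst \<gamma>' p = fst \<gamma> p"
    unfolding Step_par_def Step_def by auto
  from st obtain S where S: "S \<noteq> {}" "\<forall>p\<in>S. enabled V N r \<gamma> p"
     "\<forall>p. fst \<gamma>' p = (if p \<in> S then new_d N r \<gamma> p else fst \<gamma> p)"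
     "\<forall>p. snd \<gamma>' p = (if p \<in> S then new_par N r \<gamma> p else snd \<gamma> p)"
    unfolding Step_par_def Step_def by blast
  have SV: "p \<in> V" if "p \<in> S" for p using S(2) that unfolding enabled_def by auto
  have fe: "fst \<gamma>' = fst \<gamma>"
  proof
    fix p show "fst \<gamma>' p = fst \<gamma> p"
      using S(3) dV SV by (cases "p \<in> S") (metis, simp)
  qed
  have inS: "p \<noteq> r \<and> CP_enabled N \<gamma> p" if "p \<in> S" for p
  proof -
    have e: "enabled V N r \<gamma> p" using S(2) that by auto
    have nd: "new_d N r \<gamma> p = fst \<gamma> p" proof -
      have "fst \<gamma>' p = new_d N r \<gamma> p" using S(3) that by simp
      then show ?thesis using fe by simp
    qed
    show ?thesis
    proof (cases "p = r")
      case True then show ?thesis using e nd unfolding enabled_def new_d_def by auto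
    next
      case False
      then have "\<not> CD_enabled N \<gamma> p" using nd unfolding new_d_def CD_enabled_def by (auto split: if_splits)
      then show ?thesis using e False unfolding enabled_def by auto
    qed
  qed
  have good: "p \<notin> Bad V r \<gamma>' \<and> p \<in> Bad V r \<gamma>" if "p \<in> S" for p
  proof -
    have pr: "p \<noteq> r" and cp: "CP_enabled N \<gamma> p" using inS[OF that] by auto
    define P where "P = (\<lambda>q. fst \<gamma> q + 1 = fst \<gamma> p)"
    have sp: "snd \<gamma>' p = hd (filter P (N p))"
      using S(4) that pr cp unfolding new_par_def P_def by simp
    have "snd \<gamma>' p \<in> set (N p)" using cg' SV[OF that] unfolding is_config_def by auto
    then have ne: "N p \<noteq> []" by auto
    have "Dist N (fst \<gamma>) p \<in> (\<lambda>q. fst \<gamma> q + 1) ` set (N p)"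
      unfolding Dist_def using ne by (intro Min_in) auto
    then obtain q where "q \<in> set (N p)" "fst \<gamma> q + 1 = fst \<gamma> p"
      using cp unfolding CP_enabled_def by auto
    then have "filter P (N p) \<noteq> []" unfolding P_def by (auto simp: filter_empty_conv)
    then have "hd (filter P (N p)) \<in> set (filter P (N p))" by (rule hd_in_set)
    then have "P (snd \<gamma>' p)" using sp by simp
    then show ?thesis using fe cp SV[OF that] pr unfolding Bad_def P_def CP_enabled_def by auto
  qed
  have same: "p \<in> Bad V r \<gamma>' \<longleftrightarrow> p \<in> Bad V r \<gamma>" if "p \<notin> S" for p
    using S(4) that fe unfolding Bad_def by auto
  have "Bad V r \<gamma>' \<subseteq> Bad V r \<gamma>" using good same by blast
  moreover obtain p where "p \<in> S" using S(1) by auto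
  ultimately show ?thesis using fe good by blast
qed

theorem lemma1:
  assumes "rooted_graph V N r"
  shows "\<not> (\<exists>\<gamma> :: nat \<Rightarrow> 'v config. \<forall>i. Step_par V N r (\<gamma> i) (\<gamma> (Suc i)))"
proof
  assume "\<exists>\<gamma> :: nat \<Rightarrow> 'v config. \<forall>i. Step_par V N r (\<gamma> i) (\<gamma> (Suc i))"
  then obtain \<gamma> :: "nat \<Rightarrow> 'v config" where g: "\<forall>i. Step_par V N r (\<gamma> i) (\<gamma> (Suc i))" by blast
  have fin: "finite V" using assms unfolding rooted_graph_def by blast
  have fb: "finite (Bad V r c)" for c using fin unfolding Bad_def by auto
  have "card (Bad V r (\<gamma> i)) + i \<le> card (Bad V r (\<gamma> 0))" for i
  proof (induction i)
    case 0 then show ?case by simp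
  next
    case (Suc i)
    have "Bad V r (\<gamma> (Suc i)) \<subset> Bad V r (\<gamma> i)" using step_par_dec[OF g[rule_format]] by blast
    then have "card (Bad V r (\<gamma> (Suc i))) < card (Bad V r (\<gamma> i))"
      using fb by (intro psubset_card_mono) auto
    then show ?case using Suc by simp
  qed
  from this[of "Suc (card (Bad V r (\<gamma> 0)))"] show False by simp
qed

end
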